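(* For every finite game $\Gamma$ whose players have CPT preferences, there exists a profile of conjectures $\sigma^*=(\sigma^*_1,\dots,\sigma^*_n)\in\prod_i\Delta(A_i)$ such that $\sigma_i^*\in\overline{co}\big(\mathcal{B}_i(\mu_{-i}(\sigma^*_{-i}))\big)$ for all $i\in N$.
   Context: A game $\Gamma=(N,(A_i),(x_i))$: players $N=\{1,\dots,n\}$, finite action sets $A_i$, payoffs $x_i:A\to\mathbb{R}$, $A=\prod_iA_i$, $A_{-i}=\prod_{j\neq i}A_j$. Each player $i$ has CPT preferences with CPT value functional $V_i$ on finite lotteries (determined by a reference point, a continuous strictly increasing value function vanishing at the reference point, and continuous strictly increasing probability weighting functions $w_i^\pm:[0,1]\to[0,1]$ fixing $0$ and $1$, via the standard rank-dependent CPT formula). $B_i=\Delta(A_i)$ is the set of black-box strategies; for a belief $\mu_{-i}\in\Delta(A_{-i})$ and $b_i\in B_i$, $\mu(b_i,\mu_{-i})[a]=b_i[a_i]\mu_{-i}[a_{-i}]$, and $\mathcal{B}_i(\mu_{-i})=\arg\max_{b_i\in B_i}V_i(\{(\mu(b_i,\mu_{-i})[a],x_i(a))\}_{a\in A})$. For conjectures $\sigma_j\in\Delta(A_j)$, $\mu_{-i}(\sigma_{-i})[a_{-i}]=\prod_{j\ne i}\sigma_j[a_j]$. $\overline{co}$ denotes closed convex hull. *)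

theory Defs
  imports "HOL-Analysis.Analysis"
begin

definition Delta :: "'a::finite set \<Rightarrow> (real ^ 'a) set" where
  "Delta S = {b. (\<forall>a. 0 \<le> b $ a) \<and> (\<forall>a. a \<notin> S \<longrightarrow> b $ a = 0) \<and> (\<Sum>a\<in>S. b $ a) = 1}"

definition weighting_fun :: "(real \<Rightarrow> real) \<Rightarrow> bool" where
  "weighting_fun w \<longleftrightarrow> continuous_on {0..1} w \<and> strict_mono_on {0..1} w
     \<and> w ` {0..1} \<subseteq> {0..1} \<and> w 0 = 0 \<and> w 1 = 1"

definition cpt_pref :: "real \<Rightarrow> (real \<Rightarrow> real) \<Rightarrow> (real \<Rightarrow> real) \<Rightarrow> (real \<Rightarrow> real) \<Rightarrow> bool" where
  "cpt_pref r v wp wm \<longleftrightarrow> continuous_on UNIV v \<and> strict_mono v \<and> v r = 0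
     \<and> weighting_fun wp \<and> weighting_fun wm"

text \<open>CPT value of the finite lottery {(p s, X s)}_{s in S} (rank-dependent formula,
outcomes with equal value grouped together).\<close>
definition cpt_value :: "real \<Rightarrow> (real \<Rightarrow> real) \<Rightarrow> (real \<Rightarrow> real) \<Rightarrow> (real \<Rightarrow> real)
    \<Rightarrow> 's set \<Rightarrow> ('s \<Rightarrow> real) \<Rightarrow> ('s \<Rightarrow> real) \<Rightarrow> real" where
  "cpt_value r v wp wm S p X =
     (\<Sum>y\<in>X ` S \<inter> {r<..}.
        (wp (\<Sum>s\<in>{s\<in>S. y \<le> X s}. p s) - wp (\<Sum>s\<in>{s\<in>S. y < X s}. p s)) * v y)
   + (\<Sum>y\<in>X ` S \<inter> {..<r}.
        (wm (\<Sum>s\<in>{s\<in>S. X s \<le> y}. p s) - wm (\<Sum>s\<in>{s\<in>S. X s < y}. p s)) * v y)"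

definition profiles :: "('n \<Rightarrow> 'a set) \<Rightarrow> ('n \<Rightarrow> 'a) set" where
  "profiles A = PiE UNIV A"

definition prof_minus :: "'n \<Rightarrow> ('n \<Rightarrow> 'a) \<Rightarrow> ('n \<Rightarrow> 'a)" where
  "prof_minus i a = restrict a (UNIV - {i})"

definition mu_joint :: "'n \<Rightarrow> real ^ 'a \<Rightarrow> (('n \<Rightarrow> 'a) \<Rightarrow> real) \<Rightarrow> ('n \<Rightarrow> 'a) \<Rightarrow> real" where
  "mu_joint i b \<mu> a = b $ (a i) * \<mu> (prof_minus i a)"

definition mu_minus :: "'n::finite \<Rightarrow> ('n \<Rightarrow> real ^ 'a) \<Rightarrow> ('n \<Rightarrow> 'a) \<Rightarrow> real" where
  "mu_minus i \<sigma> a' = (\<Prod>j\<in>UNIV - {i}. \<sigma> j $ (a' j))"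

definition best_resp :: "('n \<Rightarrow> 'a::finite set) \<Rightarrow> ('n \<Rightarrow> ('n \<Rightarrow> 'a) \<Rightarrow> real)
    \<Rightarrow> ('n \<Rightarrow> real) \<Rightarrow> ('n \<Rightarrow> real \<Rightarrow> real) \<Rightarrow> ('n \<Rightarrow> real \<Rightarrow> real) \<Rightarrow> ('n \<Rightarrow> real \<Rightarrow> real)
    \<Rightarrow> 'n \<Rightarrow> (('n \<Rightarrow> 'a) \<Rightarrow> real) \<Rightarrow> (real ^ 'a) set" where
  "best_resp A x r v wp wm i \<mu> =
     {b \<in> Delta (A i). \<forall>b'\<in>Delta (A i).
        cpt_value (r i) (v i) (wp i) (wm i) (profiles A) (mu_joint i b' \<mu>) (x i)
        \<le> cpt_value (r i) (v i) (wp i) (wm i) (profiles A) (mu_joint i b \<mu>) (x i)}"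

end

theory Submission
  imports Defs "HOL-Analysis.Analysis"
begin


lemma uhc_seq:
  fixes G :: "'x::metric_space \<Rightarrow> 'y::metric_space set"
  assumes K: "compact K" and GK: "\<And>x. x\<in>S \<Longrightarrow> G x \<subseteq> K"
    and cg: "\<And>xs ys x y. (\<forall>n. xs n \<in> S) \<Longrightarrow> (\<forall>n. ys n \<in> G (xs n)) \<Longrightarrow> xs \<longlonglongrightarrow> x
              \<Longrightarrow> ys \<longlonglongrightarrow> y \<Longrightarrow> x \<in> S \<Longrightarrow> y \<in> G x"
    and z: "z \<in> S" and eta: "\<eta> > 0"
  shows "\<exists>\<delta>>0. \<forall>x'\<in>S. dist x' z < \<delta> \<longrightarrow> (\<forall>y\<in>G x'. \<exists>u\<in>G z. dist y u < \<eta>)"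
proof (rule ccontr)
  assume "\<not> ?thesis"
  then have "\<forall>n. \<exists>x'\<in>S. dist x' z < inverse (real (Suc n)) \<and> (\<exists>y\<in>G x'. \<forall>u\<in>G z. \<not> dist y u < \<eta>)"
    by (metis of_nat_0_less_iff positive_imp_inverse_positive zero_less_Suc)
  then obtain xs ys where xs: "\<And>n. xs n \<in> S" "\<And>n. dist (xs n) z < inverse (real (Suc n))"
    and ys: "\<And>n. ys n \<in> G (xs n)" "\<And>n u. u \<in> G z \<Longrightarrow> \<not> dist (ys n) u < \<eta>"
    by metis
  have "xs \<longlonglongrightarrow> z"
  proof -
    have "(\<lambda>n. dist (xs n) z) \<longlonglongrightarrow> 0"
    proof (rule tendsto_sandwich[of "\<lambda>n. 0" _ _ "\<lambda>n. inverse (real (Suc n))"])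
      show "\<forall>\<^sub>F n in sequentially. dist (xs n) z \<le> inverse (real (Suc n))"
        using xs(2) less_imp_le by (intro always_eventually) blast
      show "(\<lambda>n. inverse (real (Suc n))) \<longlonglongrightarrow> 0" by (rule LIMSEQ_inverse_real_of_nat)
    qed auto
    then show ?thesis using tendsto_dist_iff by blast
  qed
  have "seq_compact K" using K compact_imp_seq_compact by blast
  moreover have "\<forall>n. ys n \<in> K" using ys(1) xs(1) GK by blast
  ultimately obtain l r where l: "l \<in> K" "strict_mono r" "(ys \<circ> r) \<longlonglongrightarrow> l"
    unfolding seq_compact_def by metis
  have "(xs \<circ> r) \<longlonglongrightarrow> z" using \<open>xs \<longlonglongrightarrow> z\<close> l(2) LIMSEQ_subseq_LIMSEQ by blast
  then have "l \<in> G z" using cg[of "xs \<circ> r" "ys \<circ> r" z l] xs(1) ys(1) l(3) z by auto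
  from l(3) eta obtain N where "\<forall>n\<ge>N. dist ((ys \<circ> r) n) l < \<eta>"
    unfolding lim_sequentially by blast
  then show False using ys(2)[OF \<open>l \<in> G z\<close>, of "r N"] by auto
qed

lemma approx_fp:
  fixes S :: "'a::euclidean_space set" and g :: "'a \<Rightarrow> 'a"
  assumes S: "compact S" "convex S" "S \<noteq> {}" and gS: "\<And>x. x\<in>S \<Longrightarrow> g x \<in> S" and e: "\<epsilon> > 0"
  shows "\<exists>w\<in>S. w \<in> convex hull (g ` {c\<in>S. dist c w < \<epsilon>})"
proof -
  have "\<exists>k. finite k \<and> k \<subseteq> S \<and> S \<subseteq> (\<Union>x\<in>k. ball x \<epsilon>)"
    using seq_compact_imp_totally_bounded[OF compact_imp_seq_compact[OF S(1)]] e by blast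
  then obtain C where C: "finite C" "C \<subseteq> S" "S \<subseteq> (\<Union>x\<in>C. ball x \<epsilon>)"
    by blast
  define \<phi> :: "'a \<Rightarrow> 'a \<Rightarrow> real" where "\<phi> c x = max 0 (\<epsilon> - dist x c)" for c x
  define \<Phi> where "\<Phi> x = (\<Sum>c\<in>C. \<phi> c x)" for x
  define f where "f x = (\<Sum>c\<in>C. (\<phi> c x / \<Phi> x) *\<^sub>R g c)" for x
  have phi0: "0 \<le> \<phi> c x" for c x by (simp add: \<phi>_def)
  have Phipos: "\<Phi> x > 0" if xS: "x \<in> S" for x
  proof -
    obtain c where "c \<in> C" "x \<in> ball c \<epsilon>" using C(3) xS by blast
    then have "\<phi> c x > 0" by (simp add: \<phi>_def dist_commute)
    then show ?thesis unfolding \<Phi>_def by (rule sum_pos2[OF C(1) \<open>c\<in>C\<close>]) (rule phi0)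
  qed
  have sum1: "(\<Sum>c\<in>C. \<phi> c x / \<Phi> x) = 1" if "x \<in> S" for x
    using Phipos[OF that] unfolding sum_divide_distrib[symmetric] \<Phi>_def by simp
  have cphi: "continuous_on S (\<phi> c)" for c
    unfolding \<phi>_def by (intro continuous_intros)
  have cPhi: "continuous_on S \<Phi>"
    unfolding \<Phi>_def by (intro continuous_on_sum cphi)
  have cont: "continuous_on S f"
    unfolding f_def
    by (intro continuous_on_sum continuous_on_scaleR continuous_on_divide cphi cPhi continuous_on_const)
      (use Phipos in fastforce)
  have fS: "f x \<in> S" if "x \<in> S" for x
    unfolding f_def
    by (rule convex_sum[OF C(1) S(2) sum1[OF that]]) (use phi0 Phipos[OF that] gS C(2) in auto)
  obtain w where w: "w \<in> S" "f w = w"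
    using brouwer[OF S cont] fS by blast
  define C' where "C' = {c\<in>C. dist c w < \<epsilon>}"
  have z: "\<phi> c w = 0" if "c \<in> C - C'" for c using that by (auto simp: C'_def \<phi>_def dist_commute)
  have "f w = (\<Sum>c\<in>C'. (\<phi> c w / \<Phi> w) *\<^sub>R g c)"
    unfolding f_def by (rule sum.mono_neutral_right) (use C(1) z in \<open>auto simp: C'_def\<close>)
  moreover have "(\<Sum>c\<in>C'. \<phi> c w / \<Phi> w) = 1"
    using sum1[OF w(1)] sum.mono_neutral_right[of C C' "\<lambda>c. \<phi> c w / \<Phi> w"] C(1) z
    by (auto simp: C'_def)
  moreover have "finite C'" using C(1) by (simp add: C'_def)
  ultimately have "f w \<in> convex hull (g ` {c\<in>S. dist c w < \<epsilon>})"
    apply (simp only:)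
    apply (rule convex_sum[OF _ convex_convex_hull])
    using C(2) phi0 Phipos[OF w(1)] by (auto intro!: hull_inc simp: C'_def)
  then show ?thesis using w by auto
qed

lemma kakutani_comp:
  fixes S :: "('b::euclidean_space ^ 'n) set" and G :: "'n \<Rightarrow> 'b^'n \<Rightarrow> 'b set"
    and K :: "'n \<Rightarrow> 'b set"
  assumes S: "compact S" "convex S" "S \<noteq> {}"
    and Gne: "\<And>i x. x\<in>S \<Longrightarrow> G i x \<noteq> {}"
    and GK: "\<And>i x. x\<in>S \<Longrightarrow> G i x \<subseteq> K i" and K: "\<And>i. compact (K i)"
    and prod: "\<And>x t. x\<in>S \<Longrightarrow> (\<forall>i. t$i \<in> G i x) \<Longrightarrow> t \<in> S"
    and cg: "\<And>i xs ys x y. (\<forall>n. xs n \<in> S) \<Longrightarrow> (\<forall>n. ys n \<in> G i (xs n)) \<Longrightarrow> xs \<longlonglongrightarrow> x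
              \<Longrightarrow> ys \<longlonglongrightarrow> y \<Longrightarrow> x \<in> S \<Longrightarrow> y \<in> G i x"
  shows "\<exists>x\<in>S. \<forall>i. x$i \<in> closure (convex hull (G i x))"
proof (rule ccontr)
  assume neg: "\<not> ?thesis"
  define F where "F i z = closure (convex hull (G i z))" for i z
  have ex: "\<exists>i e \<delta>. e > 0 \<and> \<delta> > 0 \<and> ball (z$i) e \<inter> F i z = {} \<and>
      (\<forall>x'\<in>S. dist x' z < \<delta> \<longrightarrow> (\<forall>y\<in>G i x'. \<exists>u\<in>G i z. dist y u < e/3))" if zS: "z \<in> S" for z
  proof -
    obtain i where i: "z$i \<notin> F i z" using neg zS unfolding F_def by blast
    have "open (- F i z)" unfolding F_def by auto
    then obtain e where e: "e > 0" "ball (z$i) e \<subseteq> - F i z"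
      using i open_contains_ball by blast
    obtain \<delta> where "\<delta> > 0" "\<forall>x'\<in>S. dist x' z < \<delta> \<longrightarrow> (\<forall>y\<in>G i x'. \<exists>u\<in>G i z. dist y u < e/3)"
      using uhc_seq[of "K i" S "G i" z "e/3"] K GK cg zS e(1) by (metis divide_pos_pos zero_less_numeral)
    then show ?thesis using e by blast
  qed
  then obtain I E D where IED: "\<And>z. z\<in>S \<Longrightarrow> E z > 0 \<and> D z > 0 \<and> ball (z $ I z) (E z) \<inter> F (I z) z = {} \<and>
      (\<forall>x'\<in>S. dist x' z < D z \<longrightarrow> (\<forall>y\<in>G (I z) x'. \<exists>u\<in>G (I z) z. dist y u < E z/3))"
    by metis
  define R where "R z = min (D z) (E z / 3)" for z
  have Rpos: "R z > 0" if "z \<in> S" for z using IED[OF that] by (simp add: R_def)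
  have "S \<subseteq> \<Union>((\<lambda>z. ball z (R z)) ` S)" using Rpos by force
  then obtain \<epsilon> where eps: "\<epsilon> > 0" "\<And>x. x \<in> S \<Longrightarrow> \<exists>B\<in>(\<lambda>z. ball z (R z)) ` S. ball x \<epsilon> \<subseteq> B"
    by (rule Heine_Borel_lemma[OF S(1)]) auto
  define g where "g x = (\<chi> i. SOME y. y \<in> G i x)" for x
  have gG: "g x $ i \<in> G i x" if "x \<in> S" for x i
    unfolding g_def using Gne[OF that] by (simp add: some_in_eq)
  have gS: "g x \<in> S" if "x \<in> S" for x using prod[OF that] gG[OF that] by blast
  have "\<exists>w\<in>S. w \<in> convex hull (g ` {c\<in>S. dist c w < \<epsilon>})"
    by (rule approx_fp[OF S _ eps(1)]) (rule gS)
  then obtain w where w: "w \<in> S" "w \<in> convex hull (g ` {c\<in>S. dist c w < \<epsilon>})"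
    by blast
  from eps(2)[OF w(1)] obtain B where B: "B \<in> (\<lambda>z. ball z (R z)) ` S" "ball w \<epsilon> \<subseteq> B"
    by blast
  from B(1) obtain z where "z \<in> S" "B = ball z (R z)" by (rule imageE)
  with B(2) have z: "z \<in> S" "ball w \<epsilon> \<subseteq> ball z (R z)" by auto
  define i where "i = I z"
  define \<eta> where "\<eta> = E z / 3"
  define T where "T = (\<Union>u\<in>F i z. \<Union>b\<in>ball 0 \<eta>. {u + b})"
  have Tconv: "convex T" unfolding T_def F_def by (intro convex_sums convex_closure convex_convex_hull convex_ball)
  have gT: "g c $ i \<in> T" if cS: "c \<in> S" and cd: "dist c w < \<epsilon>" for c
  proof -
    have "c \<in> ball w \<epsilon>" using cd by (simp add: dist_commute)
    then have "c \<in> ball z (R z)" using z(2) by blast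
    then have "dist c z < D z" by (auto simp: R_def dist_commute)
    moreover have U: "\<forall>x'\<in>S. dist x' z < D z \<longrightarrow> (\<forall>y\<in>G i x'. \<exists>u\<in>G i z. dist y u < \<eta>)"
      using IED[OF z(1)] unfolding i_def \<eta>_def by (elim conjE)
    ultimately obtain u where u: "u \<in> G i z" "dist (g c $ i) u < \<eta>"
      using gG[OF cS] cS by blast
    have "u \<in> F i z" using u(1) unfolding F_def
      by (meson closure_subset hull_subset subsetD)
    moreover have "g c $ i - u \<in> ball 0 \<eta>" using u(2) by (simp add: dist_norm norm_minus_commute)
    moreover have "g c $ i = u + (g c $ i - u)" by simp
    ultimately show ?thesis unfolding T_def by blast
  qed
  have lin: "linear (\<lambda>x::'b^'n. x $ i)" using bounded_linear_vec_nth[of i] by (rule bounded_linear.linear)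
  have "w $ i \<in> (\<lambda>x. x $ i) ` (convex hull (g ` {c\<in>S. dist c w < \<epsilon>}))"
    using w(2) by (rule imageI)
  also have "\<dots> = convex hull ((\<lambda>x. x $ i) ` g ` {c\<in>S. dist c w < \<epsilon>})"
    by (rule convex_hull_linear_image[OF lin])
  also have "\<dots> \<subseteq> T"
  proof (rule hull_minimal)
    show "(\<lambda>x. x $ i) ` g ` {c\<in>S. dist c w < \<epsilon>} \<subseteq> T" using gT by blast
  qed (rule Tconv)
  finally have "w $ i \<in> T" .
  then obtain u b where ub: "u \<in> F i z" "b \<in> ball 0 \<eta>" "w $ i = u + b" unfolding T_def by blast
  have "w \<in> ball w \<epsilon>" using eps(1) by simp
  then have "w \<in> ball z (R z)" using z(2) by blast
  then have dzw: "dist z w < \<eta>" by (simp add: R_def \<eta>_def)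
  have "dist (z $ i) (w $ i) \<le> dist z w" by (rule dist_vec_nth_le)
  moreover have "dist (w $ i) u < \<eta>" using ub(2,3) by (simp add: dist_norm)
  moreover have "dist (z$i) u \<le> dist (z$i) (w$i) + dist (w$i) u" by (rule dist_triangle)
  ultimately have "dist (z$i) u < E z" using dzw unfolding \<eta>_def using zero_le_dist[of "w$i" u] by linarith
  then have "u \<in> ball (z $ I z) (E z) \<inter> F (I z) z" using ub(1) by (simp add: i_def)
  moreover have "ball (z $ I z) (E z) \<inter> F (I z) z = {}" using IED[OF z(1)] by (elim conjE)
  ultimately show False by blast
qed



lemma Delta_closed: "closed (Delta (S::'a::finite set))"
proof -
  have "Delta S = (\<Inter>a. {b. 0 \<le> b $ a}) \<inter> (\<Inter>a\<in>-S. {b. b $ a = 0}) \<inter> {b. (\<Sum>a\<in>S. b $ a) = 1}"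
    unfolding Delta_def by auto
  also have "closed \<dots>"
    by (intro closed_Int closed_INT ballI closed_Collect_le closed_Collect_eq continuous_intros)
  finally show ?thesis .
qed

lemma Delta_sum_UNIV: "b \<in> Delta S \<Longrightarrow> (\<Sum>a\<in>UNIV. b $ a) = 1"
  unfolding Delta_def
  by (metis (mono_tags, lifting) DiffE finite sum.mono_neutral_right subset_UNIV mem_Collect_eq)

lemma Delta_le1: assumes "b \<in> Delta S" shows "b $ a \<le> 1"
proof -
  have "b $ a \<le> (\<Sum>a\<in>UNIV. b $ a)"
    using assms unfolding Delta_def by (intro member_le_sum) auto
  then show ?thesis using Delta_sum_UNIV[OF assms] by simp
qed

lemma Delta_norm: assumes "b \<in> Delta (S::'a::finite set)" shows "norm b \<le> 1"
proof -
  have "norm b \<le> (\<Sum>a\<in>UNIV. \<bar>b $ a\<bar>)" by (rule norm_le_l1_cart)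
  also have "\<dots> = (\<Sum>a\<in>UNIV. b $ a)" using assms unfolding Delta_def by simp
  finally show ?thesis using Delta_sum_UNIV[OF assms] by simp
qed

lemma Delta_compact: "compact (Delta (S::'a::finite set))"
  unfolding compact_eq_bounded_closed using Delta_closed Delta_norm bounded_iff by blast

lemma Delta_convex: "convex (Delta (S::'a::finite set))"
  unfolding convex_def Delta_def
  by (auto simp: sum.distrib sum_distrib_left[symmetric])

lemma Delta_ne: assumes "a \<in> S" shows "axis a 1 \<in> Delta (S::'a::finite set)"
  using assms unfolding Delta_def by (auto simp: axis_def)

lemma mu_joint_eq:
  "mu_joint i b (mu_minus i \<sigma>) a = b $ (a i) * (\<Prod>j\<in>UNIV-{i}. \<sigma> j $ (a j))"
  unfolding mu_joint_def mu_minus_def prof_minus_def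
  by (intro arg_cong2[where f="(*)"] refl prod.cong) auto

lemma total_prob:
  fixes A :: "'n::finite \<Rightarrow> 'a::finite set"
  assumes b: "b \<in> Delta (A i)" and \<sigma>: "\<And>j. \<sigma> j \<in> Delta (A j)"
  shows "(\<Sum>a\<in>profiles A. b $ (a i) * (\<Prod>j\<in>UNIV-{i}. \<sigma> j $ (a j))) = 1"
proof -
  define \<tau> where "\<tau> = \<sigma>(i := b)"
  have \<tau>D: "\<tau> j \<in> Delta (A j)" for j using b \<sigma> by (simp add: \<tau>_def)
  have eq: "b $ (a i) * (\<Prod>j\<in>UNIV-{i}. \<sigma> j $ (a j)) = (\<Prod>j\<in>UNIV. \<tau> j $ (a j))" for a
  proof -
    have "(\<Prod>j\<in>UNIV. \<tau> j $ (a j)) = \<tau> i $ (a i) * (\<Prod>j\<in>UNIV-{i}. \<tau> j $ (a j))"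
      by (rule prod.remove) auto
    also have "(\<Prod>j\<in>UNIV-{i}. \<tau> j $ (a j)) = (\<Prod>j\<in>UNIV-{i}. \<sigma> j $ (a j))"
      by (rule prod.cong) (auto simp: \<tau>_def)
    finally show ?thesis by (simp add: \<tau>_def)
  qed
  have "(\<Sum>a\<in>profiles A. b $ (a i) * (\<Prod>j\<in>UNIV-{i}. \<sigma> j $ (a j)))
      = (\<Sum>a\<in>PiE UNIV A. \<Prod>j\<in>UNIV. \<tau> j $ (a j))"
    unfolding profiles_def eq ..
  also have "\<dots> = (\<Prod>j\<in>UNIV. \<Sum>c\<in>A j. \<tau> j $ c)"
    by (rule prod_sum_PiE[symmetric]) auto
  also have "\<dots> = 1" using \<tau>D unfolding Delta_def by simp
  finally show ?thesis .
qed

lemma cpt_cont: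
  assumes wp: "weighting_fun wp" and wm: "weighting_fun wm" and P: "finite P"
    and pc: "\<And>a. continuous_on D (\<lambda>z. p z a)"
    and pb: "\<And>z T. z \<in> D \<Longrightarrow> T \<subseteq> P \<Longrightarrow> (\<Sum>a\<in>T. p z a) \<in> {0..1}"
  shows "continuous_on D (\<lambda>z. cpt_value r v wp wm P (p z) X)"
proof -
  have cw: "continuous_on D (\<lambda>z. w (\<Sum>a\<in>T. p z a))" if "weighting_fun w" "T \<subseteq> P" for w T
  proof (rule continuous_on_compose2[of "{0..1}" w])
    show "continuous_on {0..1} w" using that(1) unfolding weighting_fun_def by blast
    show "continuous_on D (\<lambda>z. \<Sum>a\<in>T. p z a)" by (intro continuous_on_sum pc)
    show "(\<lambda>z. \<Sum>a\<in>T. p z a) ` D \<subseteq> {0..1}" using pb that(2) by blast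
  qed
  show ?thesis unfolding cpt_value_def
    by (intro continuous_on_add continuous_on_sum continuous_on_mult continuous_on_diff
        continuous_on_const cw wp wm) auto
qed

theorem theorem2:
  fixes A :: "'n::finite \<Rightarrow> 'a::finite set"
    and x :: "'n \<Rightarrow> ('n \<Rightarrow> 'a) \<Rightarrow> real"
    and r :: "'n \<Rightarrow> real"
    and v wp wm :: "'n \<Rightarrow> real \<Rightarrow> real"
  assumes "\<And>i. A i \<noteq> {}"
    and "\<And>i. cpt_pref (r i) (v i) (wp i) (wm i)"
  shows "\<exists>\<sigma> :: 'n \<Rightarrow> real ^ 'a. (\<forall>i. \<sigma> i \<in> Delta (A i)) \<and>
           (\<forall>i. \<sigma> i \<in> closure (convex hull (best_resp A x r v wp wm i (mu_minus i \<sigma>))))"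
proof -
  note Ane = assms(1)
  have wpf: "weighting_fun (wp i)" "weighting_fun (wm i)" for i
    using assms(2)[of i] unfolding cpt_pref_def by auto
  define S0 :: "(real^'a^'n) set" where "S0 = {s. \<forall>i. s $ i \<in> Delta (A i)}"
  define G where "G i s = best_resp A x r v wp wm i (mu_minus i (\<lambda>j. s $ j))" for i s
  define H where "H i (z :: (real^'a) \<times> (real^'a^'n)) =
     cpt_value (r i) (v i) (wp i) (wm i) (profiles A) (mu_joint i (fst z) (mu_minus i (\<lambda>j. snd z $ j))) (x i)" for i z
  have G_eq: "G i s = {b \<in> Delta (A i). \<forall>b'\<in>Delta (A i). H i (b', s) \<le> H i (b, s)}" for i s
    unfolding G_def H_def best_resp_def by simp
  have finP: "finite (profiles A)" unfolding profiles_def by (intro finite_PiE) auto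
  have Hc: "continuous_on (Delta (A i) \<times> S0) (H i)" for i
  proof -
    define p where "p z a = fst z $ (a i) * (\<Prod>j\<in>UNIV-{i}. snd z $ j $ (a j))"
      for z :: "(real^'a) \<times> (real^'a^'n)" and a :: "'n \<Rightarrow> 'a"
    have H': "H i z = cpt_value (r i) (v i) (wp i) (wm i) (profiles A) (p z) (x i)" for z
      unfolding H_def p_def mu_joint_eq ..
    have "continuous_on (Delta (A i) \<times> S0) (\<lambda>z. cpt_value (r i) (v i) (wp i) (wm i) (profiles A) (p z) (x i))"
    proof (rule cpt_cont[OF wpf finP])
      show "continuous_on (Delta (A i) \<times> S0) (\<lambda>z. p z a)" for a
        unfolding p_def by (intro continuous_intros)
      fix z T assume z: "z \<in> Delta (A i) \<times> S0" and T: "T \<subseteq> profiles A"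
      have nn: "0 \<le> p z a" for a
        using z unfolding p_def S0_def Delta_def by (auto intro!: mult_nonneg_nonneg prod_nonneg)
      have "(\<Sum>a\<in>profiles A. p z a) = 1"
        unfolding p_def using z by (intro total_prob) (auto simp: S0_def)
      moreover have "(\<Sum>a\<in>T. p z a) \<le> (\<Sum>a\<in>profiles A. p z a)"
        by (rule sum_mono2[OF finP T]) (rule nn)
      moreover have "0 \<le> (\<Sum>a\<in>T. p z a)" by (rule sum_nonneg) (rule nn)
      ultimately show "(\<Sum>a\<in>T. p z a) \<in> {0..1}" by simp
    qed
    then show ?thesis unfolding H' .
  qed
  have S0c: "compact S0"
  proof -
    have "S0 = (\<Inter>i. (\<lambda>s. s $ i) -` Delta (A i))" unfolding S0_def by auto
    then have cl: "closed S0" by (simp add: closed_INT closed_vimage_vec_nth Delta_closed)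
    have "norm s \<le> real CARD('n)" if "s \<in> S0" for s
    proof -
      have "norm s \<le> (\<Sum>i\<in>UNIV. norm (s $ i))" unfolding norm_vec_def by (rule L2_set_le_sum) simp
      also have "\<dots> \<le> (\<Sum>i\<in>(UNIV::'n set). 1)"
        by (rule sum_mono) (use that Delta_norm in \<open>auto simp: S0_def\<close>)
      finally show ?thesis by simp
    qed
    then have "bounded S0" unfolding bounded_iff by blast
    with cl show ?thesis by (simp add: compact_eq_bounded_closed)
  qed
  have S0cv: "convex S0"
  proof (rule convexI)
    fix s t :: "real^'a^'n" and u w :: real
    assume sS: "s \<in> S0" and tS: "t \<in> S0" and uw: "0 \<le> u" "0 \<le> w" "u + w = 1"
    show "u *\<^sub>R s + w *\<^sub>R t \<in> S0" unfolding S0_def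
    proof (intro CollectI allI)
      fix i
      have "(u *\<^sub>R s + w *\<^sub>R t) $ i = u *\<^sub>R (s $ i) + w *\<^sub>R (t $ i)" by simp
      also have "\<dots> \<in> Delta (A i)" by (rule convexD[OF Delta_convex]) (use sS tS uw in \<open>auto simp: S0_def\<close>)
      finally show "(u *\<^sub>R s + w *\<^sub>R t) $ i \<in> Delta (A i)" .
    qed
  qed
  define s0 :: "real^'a^'n" where "s0 = (\<chi> i. axis (SOME a. a \<in> A i) 1)"
  have "s0 \<in> S0" unfolding S0_def s0_def using Ane by (auto intro!: Delta_ne some_in_eq[THEN iffD2])
  then have S0ne: "S0 \<noteq> {}" by blast
  have Gne: "G i s \<noteq> {}" if sS: "s \<in> S0" for i s
  proof -
    have "continuous_on (Delta (A i)) (\<lambda>b. H i (b, s))"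
      by (rule continuous_on_compose2[OF Hc[of i]]) (use sS in \<open>auto intro!: continuous_intros\<close>)
    moreover obtain a where "a \<in> A i" using Ane by blast
    then have "Delta (A i) \<noteq> {}" using Delta_ne by blast
    ultimately obtain b where "b \<in> Delta (A i)" "\<forall>b'\<in>Delta (A i). H i (b', s) \<le> H i (b, s)"
      using continuous_attains_sup[OF Delta_compact] by blast
    then show ?thesis unfolding G_eq by blast
  qed
  have GK: "G i s \<subseteq> Delta (A i)" for i s unfolding G_eq by blast
  have prod: "t \<in> S0" if "\<forall>i. t $ i \<in> G i s" for s t using that GK unfolding S0_def by blast
  have cg: "y \<in> G i s" if xs: "\<forall>n. xs n \<in> S0" and ys: "\<forall>n. ys n \<in> G i (xs n)"
      and xl: "xs \<longlonglongrightarrow> s" and yl: "ys \<longlonglongrightarrow> y" and sS: "s \<in> S0" for i xs ys s y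
  proof -
    have ysD: "ys n \<in> Delta (A i)" for n using ys GK by blast
    have yD: "y \<in> Delta (A i)" by (rule closed_sequentially[OF Delta_closed ysD yl])
    have "H i (b', s) \<le> H i (y, s)" if b': "b' \<in> Delta (A i)" for b'
    proof (rule LIMSEQ_le)
      show "(\<lambda>n. H i (b', xs n)) \<longlonglongrightarrow> H i (b', s)"
        by (rule continuous_on_tendsto_compose[OF Hc tendsto_Pair[OF tendsto_const xl]])
          (use b' sS xs in auto)
      show "(\<lambda>n. H i (ys n, xs n)) \<longlonglongrightarrow> H i (y, s)"
        by (rule continuous_on_tendsto_compose[OF Hc tendsto_Pair[OF yl xl]])
          (use yD sS xs ysD in auto)
      show "\<exists>N. \<forall>n\<ge>N. H i (b', xs n) \<le> H i (ys n, xs n)"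
        using ys b' unfolding G_eq by blast
    qed
    then show ?thesis using yD unfolding G_eq by blast
  qed
  have "\<exists>s\<in>S0. \<forall>i. s $ i \<in> closure (convex hull (G i s))"
    apply (rule kakutani_comp[where K="\<lambda>i. Delta (A i)"])
           apply (rule S0c)
          apply (rule S0cv)
         apply (rule S0ne)
        apply (erule Gne)
       apply (rule GK)
      apply (rule Delta_compact)
     apply (rule prod, assumption)
    apply (rule cg; assumption)
    done
  then obtain s where s: "s \<in> S0" "\<forall>i. s $ i \<in> closure (convex hull (G i s))"
    by blast
  show ?thesis
  proof (intro exI[of _ "\<lambda>i. s $ i"] conjI allI)
    show "s $ i \<in> Delta (A i)" for i using s(1) unfolding S0_def by blast
    show "s $ i \<in> closure (convex hull (best_resp A x r v wp wm i (mu_minus i (\<lambda>i. s $ i))))" for i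
      using s(2) unfolding G_def by blast
  qed
qed

end
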